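(* Let $\bar\gamma_{\mathrm{R}},\bar\gamma_{\mathrm{D}},\bar\gamma_{\mathrm{E}}>0$ and $\mathcal{R}>0$. Let $h_{\mathrm{S},\mathrm{R}},h_{\mathrm{R},\mathrm{D}},h_{\mathrm{R},\mathrm{E}}$ be independent $\mathcal{CN}(0,1)$ random variables. Define $$\mathcal{R}^{1}_{\mathrm{R}\to\mathrm{D}}=\max\left\{\log_2\frac{1+\bar\gamma_{\mathrm{D}}|h_{\mathrm{R},\mathrm{D}}|^2}{1+\bar\gamma_{\mathrm{E}}|h_{\mathrm{R},\mathrm{E}}|^2},0\right\},\qquad \mathcal{R}^{1}_{\mathrm{S}\to\mathrm{R}}=\log_2\left(1+\bar\gamma_{\mathrm{R}}|h_{\mathrm{S},\mathrm{R}}|^2\right),$$ $$\mathcal{R}_1=\max\left\{\min\{\mathcal{R}^{1}_{\mathrm{R}\to\mathrm{D}},\mathcal{R}^{1}_{\mathrm{S}\to\mathrm{R}}\},0\right\},\qquad \mathcal{P}_1=\Pr(\mathcal{R}_1<\mathcal{R}).$$ Then $$\mathcal{P}_1=1-\mathrm{e}^{-\frac{2^{\mathcal{R}}-1}{\bar\gamma_{\mathrm{R}}}-\frac{2^{\mathcal{R}}-1}{\bar\gamma_{\mathrm{D}}}}\cdot\frac{1}{1+\frac{2^{\mathcal{R}}}{\bar\gamma_{\mathrm{D}}}\bar\gamma_{\mathrm{E}}}.$$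
   Context: This models a decode-and-forward relay system (source S, relay R, destination D, eavesdropper E) in which the eavesdropper overhears only the relay's transmission. $\mathcal{CN}(0,1)$ denotes a circularly symmetric complex Gaussian random variable with zero mean and unit variance (Rayleigh fading), so $|h|^2$ is exponentially distributed with mean 1. $\bar\gamma_{\mathrm{R}},\bar\gamma_{\mathrm{D}},\bar\gamma_{\mathrm{E}}$ are the average SNRs at the relay, destination and eavesdropper; $\mathcal{R}_1$ is the secrecy capacity and $\mathcal{P}_1$ the secrecy outage probability for target rate $\mathcal{R}$. *)

theory Defs
  imports "HOL-Probability.Probability"
begin

text \<open>A complex random variable h is circularly symmetric complex Gaussian CN(0,1):
  its real and imaginary parts are independent real Gaussians with mean 0 and
  variance 1/2 (so that E |h|^2 = 1).\<close>
definition (in prob_space) std_cgauss :: "('a \<Rightarrow> complex) \<Rightarrow> bool" where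
  "std_cgauss h \<longleftrightarrow>
     distributed M lborel (\<lambda>\<omega>. Re (h \<omega>)) (normal_density 0 (sqrt (1/2))) \<and>
     distributed M lborel (\<lambda>\<omega>. Im (h \<omega>)) (normal_density 0 (sqrt (1/2))) \<and>
     indep_var borel (\<lambda>\<omega>. Re (h \<omega>)) borel (\<lambda>\<omega>. Im (h \<omega>))"

end

theory Submission
  imports Defs
begin


lemma nn_integral_even:
  fixes f :: "real \<Rightarrow> ennreal"
  assumes [measurable]: "f \<in> borel_measurable borel" and ev: "\<And>x. f (-x) = f x"
  shows "(\<integral>\<^sup>+x. f x \<partial>lborel) = 2 * (\<integral>\<^sup>+x. f x * indicator {0..} x \<partial>lborel)"
proof -
  have "(\<integral>\<^sup>+x. f x \<partial>lborel) = (\<integral>\<^sup>+x. f x * indicator {0..} x + f x * indicator {..<0} x \<partial>lborel)"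
    by (intro nn_integral_cong) (auto split: split_indicator)
  also have "\<dots> = (\<integral>\<^sup>+x. f x * indicator {0..} x \<partial>lborel) + (\<integral>\<^sup>+x. f x * indicator {..<0} x \<partial>lborel)"
    by (rule nn_integral_add) auto
  also have "(\<integral>\<^sup>+x. f x * indicator {..<0} x \<partial>lborel) = (\<integral>\<^sup>+x. f (0 + (-1)*x) * indicator {..<0} (0 + (-1)*x) \<partial>lborel)"
    using nn_integral_real_affine[of "\<lambda>x. f x * indicator {..<0} x" "-1" 0] by simp
  also have "\<dots> = (\<integral>\<^sup>+x. f x * indicator {0..} x \<partial>lborel)"
    by (intro nn_integral_cong_AE eventually_mono[OF AE_lborel_singleton[of 0]]) (auto simp: ev split: split_indicator)
  finally show ?thesis by (simp add: mult_2)
qed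

lemma nn_integral_cauchy: "(\<integral>\<^sup>+s. ennreal (1 / (1 + s\<^sup>2)) \<partial>lborel) = ennreal pi"
proof -
  have "(\<integral>\<^sup>+s. ennreal (1 / (1 + s\<^sup>2)) \<partial>lborel) = 2 * (\<integral>\<^sup>+s. ennreal (1 / (1 + s\<^sup>2)) * indicator {0..} s \<partial>lborel)"
    by (rule nn_integral_even) auto
  also have "(\<integral>\<^sup>+s. ennreal (1 / (1 + s\<^sup>2)) * indicator {0..} s \<partial>lborel) = ennreal (pi / 2 - arctan 0)"
  proof (rule nn_integral_FTC_atLeast)
    show "(arctan \<longlongrightarrow> pi / 2) at_top" by (rule tendsto_arctan_at_top)
  qed (auto intro!: derivative_eq_intros simp: add_nonneg_eq_0_iff field_simps power2_eq_square)
  finally have "(\<integral>\<^sup>+s. ennreal (1 / (1 + s\<^sup>2)) \<partial>lborel) = 2 * ennreal (pi / 2)" by simp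
  also have "2 * ennreal (pi / 2) = ennreal pi"
    by (subst ennreal_numeral[symmetric], subst ennreal_mult[symmetric]) auto
  finally show ?thesis .
qed

lemma inner_x:
  fixes k a :: real assumes k: "k > 0" and a: "a \<ge> 0"
  shows "(\<integral>\<^sup>+x. ennreal (if x\<^sup>2 * k \<le> a then \<bar>x\<bar> * exp (- (x\<^sup>2 * k)) / pi else 0) \<partial>lborel)
     = ennreal ((1 - exp (- a)) / (pi * k))"
proof -
  define r where "r = sqrt (a / k)"
  have r: "r \<ge> 0" "r\<^sup>2 * k = a" using k a by (auto simp: r_def)
  have iff: "x \<ge> 0 \<Longrightarrow> x\<^sup>2 * k \<le> a \<longleftrightarrow> x \<le> r" for x
  proof -
    assume x: "x \<ge> 0"
    have "x\<^sup>2 * k \<le> a \<longleftrightarrow> x\<^sup>2 \<le> r\<^sup>2" using k r by (simp add: field_simps flip: r(2))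
    also have "\<dots> \<longleftrightarrow> x \<le> r" using x r by (simp add: abs_le_square_iff[symmetric]) 
    finally show ?thesis .
  qed
  have "(\<integral>\<^sup>+x. ennreal (if x\<^sup>2 * k \<le> a then \<bar>x\<bar> * exp (- (x\<^sup>2 * k)) / pi else 0) \<partial>lborel)
     = 2 * (\<integral>\<^sup>+x. ennreal (if x\<^sup>2 * k \<le> a then \<bar>x\<bar> * exp (- (x\<^sup>2 * k)) / pi else 0) * indicator {0..} x \<partial>lborel)"
    by (rule nn_integral_even) auto
  also have "(\<integral>\<^sup>+x. ennreal (if x\<^sup>2 * k \<le> a then \<bar>x\<bar> * exp (- (x\<^sup>2 * k)) / pi else 0) * indicator {0..} x \<partial>lborel)
     = (\<integral>\<^sup>+x. ennreal (x * exp (- (x\<^sup>2 * k)) / pi) * indicator {0..r} x \<partial>lborel)"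
    by (intro nn_integral_cong) (auto simp: iff split: split_indicator)
  also have "\<dots> = ennreal ((- exp (- (r\<^sup>2 * k)) / (2 * k * pi)) - (- exp (- (0\<^sup>2 * k)) / (2 * k * pi)))"
    by (rule nn_integral_FTC_Icc) (use k r in \<open>auto intro!: derivative_eq_intros simp: field_simps\<close>)
  also have "(- exp (- (r\<^sup>2 * k)) / (2 * k * pi)) - (- exp (- (0\<^sup>2 * k)) / (2 * k * pi)) = (1 - exp (- a)) / (2 * k * pi)"
    unfolding r(2) by (simp add: diff_divide_distrib)
  also have "2 * ennreal ((1 - exp (- a)) / (2 * k * pi)) = ennreal (2 * ((1 - exp (- a)) / (2 * k * pi)))"
  proof -
    have "exp (- a) \<le> 1" using a by simp
    then have "0 \<le> (1 - exp (- a)) / (2 * k * pi)" using k by (intro divide_nonneg_pos) auto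
    then show ?thesis by (subst ennreal_mult) auto
  qed
  also have "2 * ((1 - exp (- a)) / (2 * k * pi)) = (1 - exp (- a)) / (pi * k)"
    using k by (simp add: field_simps)
  finally show ?thesis .
qed


lemma disk_integral:
  fixes a :: real assumes a: "a \<ge> 0"
  shows "(\<integral>\<^sup>+x. \<integral>\<^sup>+y. ennreal (if x\<^sup>2 + y\<^sup>2 \<le> a then exp (- (x\<^sup>2 + y\<^sup>2)) / pi else 0) \<partial>lborel \<partial>lborel)
     = ennreal (1 - exp (- a))"
proof -
  let ?G = "\<lambda>x s. ennreal (if x\<^sup>2 * (1 + s\<^sup>2) \<le> a then \<bar>x\<bar> * exp (- (x\<^sup>2 * (1 + s\<^sup>2))) / pi else 0)"
  have step1: "(\<integral>\<^sup>+y. ennreal (if x\<^sup>2 + y\<^sup>2 \<le> a then exp (- (x\<^sup>2 + y\<^sup>2)) / pi else 0) \<partial>lborel)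
      = (\<integral>\<^sup>+s. ?G x s \<partial>lborel)" if x: "x \<noteq> 0" for x
  proof -
    have "(\<integral>\<^sup>+y. ennreal (if x\<^sup>2 + y\<^sup>2 \<le> a then exp (- (x\<^sup>2 + y\<^sup>2)) / pi else 0) \<partial>lborel)
       = ennreal \<bar>x\<bar> * (\<integral>\<^sup>+s. ennreal (if x\<^sup>2 + (0 + x * s)\<^sup>2 \<le> a then exp (- (x\<^sup>2 + (0 + x * s)\<^sup>2)) / pi else 0) \<partial>lborel)"
      by (rule nn_integral_real_affine) (use x in auto)
    also have "\<dots> = (\<integral>\<^sup>+s. ennreal \<bar>x\<bar> * ennreal (if x\<^sup>2 + (0 + x * s)\<^sup>2 \<le> a then exp (- (x\<^sup>2 + (0 + x * s)\<^sup>2)) / pi else 0) \<partial>lborel)"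
      by (rule nn_integral_cmult[symmetric]) auto
    also have "\<dots> = (\<integral>\<^sup>+s. ?G x s \<partial>lborel)"
    proof (intro nn_integral_cong)
      fix s :: real
      have e: "x\<^sup>2 + (0 + x * s)\<^sup>2 = x\<^sup>2 * (1 + s\<^sup>2)" by (simp add: power_mult_distrib algebra_simps)
      show "ennreal \<bar>x\<bar> * ennreal (if x\<^sup>2 + (0 + x * s)\<^sup>2 \<le> a then exp (- (x\<^sup>2 + (0 + x * s)\<^sup>2)) / pi else 0) = ?G x s"
        unfolding e by (auto simp flip: ennreal_mult)
    qed
    finally show ?thesis .
  qed
  have "(\<integral>\<^sup>+x. \<integral>\<^sup>+y. ennreal (if x\<^sup>2 + y\<^sup>2 \<le> a then exp (- (x\<^sup>2 + y\<^sup>2)) / pi else 0) \<partial>lborel \<partial>lborel)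
     = (\<integral>\<^sup>+x. \<integral>\<^sup>+s. ?G x s \<partial>lborel \<partial>lborel)"
    by (rule nn_integral_cong_AE, rule eventually_mono[OF AE_lborel_singleton[of 0]], erule step1)
  also have "\<dots> = (\<integral>\<^sup>+s. \<integral>\<^sup>+x. ?G x s \<partial>lborel \<partial>lborel)"
    by (rule lborel_pair.Fubini') auto
  also have "\<dots> = (\<integral>\<^sup>+s. ennreal ((1 - exp (- a)) / pi) * ennreal (1 / (1 + s\<^sup>2)) \<partial>lborel)"
  proof (intro nn_integral_cong)
    fix s :: real
    have k: "1 + s\<^sup>2 > 0" by (simp add: add_pos_nonneg)
    have "exp (- a) \<le> 1" using a by simp
    then have nn: "0 \<le> (1 - exp (- a)) / pi" by auto
    show "(\<integral>\<^sup>+x. ?G x s \<partial>lborel) = ennreal ((1 - exp (- a)) / pi) * ennreal (1 / (1 + s\<^sup>2))"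
      using inner_x[OF k a] nn k by (simp add: ennreal_mult[symmetric])
  qed
  also have "\<dots> = ennreal ((1 - exp (- a)) / pi) * ennreal pi"
    by (simp add: nn_integral_cmult nn_integral_cauchy)
  also have "\<dots> = ennreal (1 - exp (- a))"
  proof -
    have "exp (- a) \<le> 1" using a by simp
    then show ?thesis by (simp add: ennreal_mult[symmetric])
  qed
  finally show ?thesis .
qed



lemma ndens: "normal_density 0 (sqrt (1/2)) x = exp (- x\<^sup>2) / sqrt pi"
  by (simp add: normal_density_def real_sqrt_divide power_divide)

lemma pair_lborel_iter:
  fixes f :: "real \<times> real \<Rightarrow> ennreal" shows "f \<in> borel_measurable (lborel \<Otimes>\<^sub>M lborel) \<Longrightarrow> integral\<^sup>N (lborel \<Otimes>\<^sub>M lborel) f = (\<integral>\<^sup>+x. \<integral>\<^sup>+y. f (x, y) \<partial>lborel \<partial>lborel)"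
  by (rule lborel.nn_integral_fst[symmetric])

lemma (in prob_space) cgauss_exp:
  assumes "std_cgauss h"
  shows "distributed M lborel (\<lambda>\<omega>. (cmod (h \<omega>))\<^sup>2) (exponential_density 1)"
proof -
  note dU = assms[unfolded std_cgauss_def, THEN conjunct1]
  note dV = assms[unfolded std_cgauss_def, THEN conjunct2, THEN conjunct1]
  note ind = assms[unfolded std_cgauss_def, THEN conjunct2, THEN conjunct2]
  have ind': "indep_var lborel (\<lambda>\<omega>. Re (h \<omega>)) lborel (\<lambda>\<omega>. Im (h \<omega>))"
    using indep_var_compose[OF ind, of id lborel id lborel] by (simp add: comp_def)
  have D: "distributed M (lborel \<Otimes>\<^sub>M lborel) (\<lambda>\<omega>. (Re (h \<omega>), Im (h \<omega>)))
      (\<lambda>(x, y). ennreal (normal_density 0 (sqrt (1/2)) x) * ennreal (normal_density 0 (sqrt (1/2)) y))"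
    by (rule distributed_joint_indep[OF lborel.sigma_finite_measure_axioms lborel.sigma_finite_measure_axioms dU dV ind'])
  have [measurable]: "(\<lambda>\<omega>. Re (h \<omega>)) \<in> borel_measurable M" "(\<lambda>\<omega>. Im (h \<omega>)) \<in> borel_measurable M"
    using distributed_measurable[OF dU] distributed_measurable[OF dV] by auto
  have W: "(\<lambda>\<omega>. (cmod (h \<omega>))\<^sup>2) = (\<lambda>\<omega>. (Re (h \<omega>))\<^sup>2 + (Im (h \<omega>))\<^sup>2)"
    by (simp add: cmod_power2)
  show ?thesis unfolding W
  proof (rule exponential_distributedI)
    show "(\<lambda>\<omega>. (Re (h \<omega>))\<^sup>2 + (Im (h \<omega>))\<^sup>2) \<in> borel_measurable M" by measurable
    show "0 < (1::real)" by simp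
  next
    fix a :: real assume a: "0 \<le> a"
    let ?S = "{p :: real \<times> real. (fst p)\<^sup>2 + (snd p)\<^sup>2 \<le> a}"
    have S0: "{p \<in> space (lborel \<Otimes>\<^sub>M lborel). (fst p)\<^sup>2 + (snd p)\<^sup>2 \<le> a} \<in> sets (lborel \<Otimes>\<^sub>M lborel)"
      by measurable
    have S[measurable]: "?S \<in> sets (lborel \<Otimes>\<^sub>M lborel)"
      using S0 by (simp add: space_pair_measure)
    have mS: "(\<lambda>p. (case p of (x, y) \<Rightarrow> ennreal (normal_density 0 (sqrt (1/2)) x) * ennreal (normal_density 0 (sqrt (1/2)) y)) * indicator ?S p) \<in> borel_measurable (lborel \<Otimes>\<^sub>M lborel)"
      unfolding case_prod_beta by (intro borel_measurable_times_ennreal borel_measurable_indicator S) measurable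
    have "emeasure M {x \<in> space M. (Re (h x))\<^sup>2 + (Im (h x))\<^sup>2 \<le> a} = emeasure M ((\<lambda>\<omega>. (Re (h \<omega>), Im (h \<omega>))) -` ?S \<inter> space M)"
      by (rule arg_cong[where f="emeasure M"]) auto
    also have "\<dots> = (\<integral>\<^sup>+p. (\<lambda>(x, y). ennreal (normal_density 0 (sqrt (1/2)) x) * ennreal (normal_density 0 (sqrt (1/2)) y)) p * indicator ?S p \<partial>(lborel \<Otimes>\<^sub>M lborel))"
      by (rule distributed_emeasure[OF D S])
    also have "\<dots> = (\<integral>\<^sup>+x. \<integral>\<^sup>+y. (\<lambda>(x, y). ennreal (normal_density 0 (sqrt (1/2)) x) * ennreal (normal_density 0 (sqrt (1/2)) y)) (x, y) * indicator ?S (x, y) \<partial>lborel \<partial>lborel)"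
      by (subst pair_lborel_iter) (rule mS, rule refl)
    also have "\<dots> = (\<integral>\<^sup>+x. \<integral>\<^sup>+y. ennreal (if x\<^sup>2 + y\<^sup>2 \<le> a then exp (- (x\<^sup>2 + y\<^sup>2)) / pi else 0) \<partial>lborel \<partial>lborel)"
    proof (intro nn_integral_cong)
      fix x y :: real
      have "exp (- x\<^sup>2) / sqrt pi * (exp (- y\<^sup>2) / sqrt pi) = exp (- (x\<^sup>2 + y\<^sup>2)) / pi"
      proof -
        have "exp (- x\<^sup>2) * exp (- y\<^sup>2) = exp (- (x\<^sup>2 + y\<^sup>2))" by (simp add: mult_exp_exp)
        moreover have "sqrt pi * sqrt pi = pi" by simp
        ultimately show ?thesis by (metis times_divide_times_eq)
      qed
      then show "(\<lambda>(x, y). ennreal (normal_density 0 (sqrt (1/2)) x) * ennreal (normal_density 0 (sqrt (1/2)) y)) (x, y) * indicator ?S (x, y)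
          = ennreal (if x\<^sup>2 + y\<^sup>2 \<le> a then exp (- (x\<^sup>2 + y\<^sup>2)) / pi else 0)"
        by (simp add: ndens ennreal_mult[symmetric] split: split_indicator)
    qed
    also have "\<dots> = ennreal (1 - exp (- a))" by (rule disk_integral[OF a])
    finally have e: "emeasure M {x \<in> space M. (Re (h x))\<^sup>2 + (Im (h x))\<^sup>2 \<le> a} = ennreal (1 - exp (- a))" .
    have eq: "ennreal (1 - exp (- a)) = 1 - ennreal (exp (- a * 1))"
      by (subst ennreal_1[symmetric], subst ennreal_minus) auto
    show "emeasure M {x \<in> space M. (Re (h x))\<^sup>2 + (Im (h x))\<^sup>2 \<le> a} = 1 - ennreal (exp (- a * 1))"
      by (rule trans[OF e eq])
  qed
qed



lemma event_iff:
  fixes gR gD gE Rt X Y Z :: real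
  assumes "gR > 0" "gD > 0" "gE > 0" "Rt > 0" "X \<ge> 0" "Y \<ge> 0" "Z \<ge> 0"
  shows "max (min (max (log 2 ((1 + gD * Y) / (1 + gE * Z))) 0) (log 2 (1 + gR * X))) 0 < Rt
     \<longleftrightarrow> \<not> ((2 powr Rt - 1) / gR \<le> X \<and> (2 powr Rt - 1) / gD + 2 powr Rt * gE / gD * Z \<le> Y)"
proof -
  have p1: "1 + gR * X > 0" "1 + gD * Y > 0" "1 + gE * Z > 0" using assms by (auto intro: add_pos_nonneg)
  have "max (min (max (log 2 ((1 + gD * Y) / (1 + gE * Z))) 0) (log 2 (1 + gR * X))) 0 < Rt
     \<longleftrightarrow> log 2 ((1 + gD * Y) / (1 + gE * Z)) < Rt \<or> log 2 (1 + gR * X) < Rt"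
    using assms(4) by auto
  also have "log 2 (1 + gR * X) < Rt \<longleftrightarrow> 1 + gR * X < 2 powr Rt"
    using p1 by (simp add: log_less_iff)
  also have "\<dots> \<longleftrightarrow> X < (2 powr Rt - 1) / gR"
    using assms(1) by (simp add: field_simps)
  also have "log 2 ((1 + gD * Y) / (1 + gE * Z)) < Rt \<longleftrightarrow> (1 + gD * Y) / (1 + gE * Z) < 2 powr Rt"
    using p1 by (simp add: log_less_iff)
  also have "\<dots> \<longleftrightarrow> 1 + gD * Y < 2 powr Rt * (1 + gE * Z)"
    using p1 by (simp add: divide_less_eq)
  also have "\<dots> \<longleftrightarrow> Y < (2 powr Rt - 1) / gD + 2 powr Rt * gE / gD * Z"
  proof -
    have e: "(2 powr Rt - 1) / gD + 2 powr Rt * gE / gD * Z = (2 powr Rt - 1 + 2 powr Rt * gE * Z) / gD"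
      by (simp add: add_divide_distrib)
    show ?thesis unfolding e using assms(2) by (simp add: less_divide_eq algebra_simps)
  qed
  finally show ?thesis by auto
qed

lemma exp_lin_zero:
  fixes k :: real assumes k: "k > 0"
  shows "((\<lambda>z::real. exp (- (k * z))) \<longlongrightarrow> 0) at_top"
  using k by (intro filterlim_compose[OF exp_at_bot] filterlim_compose[OF filterlim_uminus_at_bot_at_top]
        filterlim_tendsto_pos_mult_at_top[OF tendsto_const _ filterlim_ident]) auto

lemma surv_exp:
  fixes a :: real assumes a: "a \<ge> 0"
  shows "(\<integral>\<^sup>+x. ennreal (exponential_density 1 x) * indicator {a..} x \<partial>lborel) = ennreal (exp (- a))"
proof -
  have "(\<integral>\<^sup>+x. ennreal (exponential_density 1 x) * indicator {a..} x \<partial>lborel)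
      = (\<integral>\<^sup>+x. ennreal (exp (- x)) * indicator {a..} x \<partial>lborel)"
    using a by (intro nn_integral_cong) (auto simp: exponential_density_def split: split_indicator)
  also have "\<dots> = ennreal (0 - (- exp (- a)))"
  proof (rule nn_integral_FTC_atLeast)
    show "((\<lambda>x::real. - exp (- x)) \<longlongrightarrow> 0) at_top"
      using tendsto_minus[OF exp_lin_zero[of 1]] by simp
  qed (auto intro!: derivative_eq_intros)
  finally show ?thesis by simp
qed

lemma laplace_exp:
  fixes b c :: real assumes c: "c \<ge> 0"
  shows "(\<integral>\<^sup>+z. ennreal (exponential_density 1 z) * ennreal (exp (- (b + c * z))) \<partial>lborel) = ennreal (exp (- b) / (1 + c))"
proof -
  have "(\<integral>\<^sup>+z. ennreal (exponential_density 1 z) * ennreal (exp (- (b + c * z))) \<partial>lborel)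
      = (\<integral>\<^sup>+z. ennreal (exp (- b) * exp (- ((1 + c) * z))) * indicator {0..} z \<partial>lborel)"
  proof (intro nn_integral_cong)
    fix z :: real
    have "exp (- z) * exp (- (b + c * z)) = exp (- b) * exp (- ((1 + c) * z))"
      by (simp add: mult_exp_exp algebra_simps)
    then show "ennreal (exponential_density 1 z) * ennreal (exp (- (b + c * z))) = ennreal (exp (- b) * exp (- ((1 + c) * z))) * indicator {0..} z"
      by (auto simp: exponential_density_def ennreal_mult[symmetric] split: split_indicator)
  qed
  also have "\<dots> = ennreal (0 - ((- exp (- b) / (1 + c)) * exp (- ((1 + c) * 0))))"
  proof (rule nn_integral_FTC_atLeast)
    have "((\<lambda>z::real. exp (- ((1 + c) * z))) \<longlongrightarrow> 0) at_top"
      using c by (intro exp_lin_zero) auto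
    from tendsto_mult[OF tendsto_const[of "- exp (- b) / (1 + c)"] this]
    show "((\<lambda>z::real. (- exp (- b) / (1 + c)) * exp (- ((1 + c) * z))) \<longlongrightarrow> 0) at_top"
      by simp
  next
    fix z :: real
    have q: "1 + c > 0" using c by simp
    have alg: "(- B / q) * (e * - q) = B * e" if "q > 0" for B e q :: real
      using that by (simp add: field_simps)
    have "((\<lambda>z. (- exp (- b) / (1 + c)) * exp (- ((1 + c) * z))) has_real_derivative
        (- exp (- b) / (1 + c)) * (exp (- ((1 + c) * z)) * - (1 + c))) (at z)"
      using q by (auto intro!: derivative_eq_intros)
    then show "((\<lambda>z. (- exp (- b) / (1 + c)) * exp (- ((1 + c) * z))) has_real_derivative
        exp (- b) * exp (- ((1 + c) * z))) (at z)"
      unfolding alg[OF q] .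
  qed auto
  finally show ?thesis by simp
qed



lemma pair_lborel_iter2:
  fixes f :: "real \<times> real \<Rightarrow> ennreal"
  shows "f \<in> borel_measurable (lborel \<Otimes>\<^sub>M lborel) \<Longrightarrow> integral\<^sup>N (lborel \<Otimes>\<^sub>M lborel) f = (\<integral>\<^sup>+z. \<integral>\<^sup>+y. f (y, z) \<partial>lborel \<partial>lborel)"
  by (rule lborel_pair.nn_integral_snd[symmetric])

theorem theorem1:
  fixes M :: "'a measure" and hSR hRD hRE :: "'a \<Rightarrow> complex"
    and gR gD gE Rt :: real
  assumes "prob_space M"
    and "gR > 0" and "gD > 0" and "gE > 0" and "Rt > 0"
    and "prob_space.std_cgauss M hSR" and "prob_space.std_cgauss M hRD"
    and "prob_space.std_cgauss M hRE"
    and "prob_space.indep_vars M (\<lambda>_. borel) (\<lambda>i::nat. [hSR, hRD, hRE] ! i) {0, 1, 2}"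
  shows "let RRD = (\<lambda>\<omega>. max (log 2 ((1 + gD * (cmod (hRD \<omega>))\<^sup>2) / (1 + gE * (cmod (hRE \<omega>))\<^sup>2))) 0);
             RSR = (\<lambda>\<omega>. log 2 (1 + gR * (cmod (hSR \<omega>))\<^sup>2));
             R1 = (\<lambda>\<omega>. max (min (RRD \<omega>) (RSR \<omega>)) 0)
         in measure M {\<omega> \<in> space M. R1 \<omega> < Rt}
            = 1 - exp (- (2 powr Rt - 1) / gR - (2 powr Rt - 1) / gD)
                  * (1 / (1 + 2 powr Rt / gD * gE))"
proof -
  interpret prob_space M by fact
  define X where "X = (\<lambda>\<omega>. (cmod (hSR \<omega>))\<^sup>2)"
  define Y where "Y = (\<lambda>\<omega>. (cmod (hRD \<omega>))\<^sup>2)"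
  define Z where "Z = (\<lambda>\<omega>. (cmod (hRE \<omega>))\<^sup>2)"
  define a where "a = (2 powr Rt - 1) / gR"
  define b where "b = (2 powr Rt - 1) / gD"
  define c where "c = 2 powr Rt * gE / gD"
  have pw: "2 powr Rt > 1" using assms(5) by simp
  have a0: "a \<ge> 0" and b0: "b \<ge> 0" and c0: "c \<ge> 0"
    using pw assms(2-4) by (auto simp: a_def b_def c_def)
  have dX: "distributed M lborel X (exponential_density 1)"
    unfolding X_def by (rule cgauss_exp[OF assms(6)])
  have dY: "distributed M lborel Y (exponential_density 1)"
    unfolding Y_def by (rule cgauss_exp[OF assms(7)])
  have dZ: "distributed M lborel Z (exponential_density 1)"
    unfolding Z_def by (rule cgauss_exp[OF assms(8)])
  have [measurable]: "X \<in> borel_measurable M" "Y \<in> borel_measurable M" "Z \<in> borel_measurable M"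
    using distributed_measurable[OF dX] distributed_measurable[OF dY] distributed_measurable[OF dZ] by auto
  define V where "V = (\<lambda>i \<omega>. (cmod (([hSR, hRD, hRE] ! i) \<omega>))\<^sup>2)"
  have indV: "indep_vars (\<lambda>_. borel) V {0, 1, 2}"
    unfolding V_def by (rule indep_vars_compose2[OF assms(9)]) measurable
  have V0: "V 0 = X" and V1: "V 1 = Y" and V2: "V 2 = Z"
    by (auto simp: V_def X_def Y_def Z_def)
  have ind1: "indep_var (PiM {0} (\<lambda>_. borel)) (\<lambda>\<omega>. restrict (\<lambda>i. V i \<omega>) {0})
       (PiM {1, 2} (\<lambda>_. borel)) (\<lambda>\<omega>. restrict (\<lambda>i. V i \<omega>) {1, 2})"
    by (rule indep_var_restrict[OF indV]) auto
  define Xa where "Xa = {f \<in> space (PiM {0::nat} (\<lambda>_. borel :: real measure)). a \<le> f 0}"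
  define Xb where "Xb = {f \<in> space (PiM {1::nat, 2} (\<lambda>_. borel :: real measure)). b + c * f 2 \<le> f 1}"
  have sXa: "Xa \<in> sets (PiM {0} (\<lambda>_. borel))" unfolding Xa_def by measurable
  have sXb: "Xb \<in> sets (PiM {1, 2} (\<lambda>_. borel))" unfolding Xb_def by measurable
  define E where "E = {\<omega> \<in> space M. a \<le> X \<omega> \<and> b + c * Z \<omega> \<le> Y \<omega>}"
  have E_eq: "E = (\<lambda>\<omega>. (restrict (\<lambda>i. V i \<omega>) {0}, restrict (\<lambda>i. V i \<omega>) {1, 2})) -` (Xa \<times> Xb) \<inter> space M"
    by (auto simp: E_def Xa_def Xb_def space_PiM V0 V1 V2 simp flip: V0 V1 V2)
  have Xa_eq: "(\<lambda>\<omega>. restrict (\<lambda>i. V i \<omega>) {0}) -` Xa \<inter> space M = X -` {a..} \<inter> space M"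
    by (auto simp: Xa_def space_PiM simp flip: V0)
  have Xb_eq: "(\<lambda>\<omega>. restrict (\<lambda>i. V i \<omega>) {1, 2}) -` Xb \<inter> space M = (\<lambda>\<omega>. (Y \<omega>, Z \<omega>)) -` {p. b + c * snd p \<le> fst p} \<inter> space M"
    by (auto simp: Xb_def space_PiM simp flip: V1 V2)
  have probE: "prob E = prob (X -` {a..} \<inter> space M) * prob ((\<lambda>\<omega>. (Y \<omega>, Z \<omega>)) -` {p. b + c * snd p \<le> fst p} \<inter> space M)"
    unfolding E_eq using indep_varD[OF ind1 sXa sXb] by (simp only: Xa_eq Xb_eq)
  have ind2: "indep_var lborel Y lborel Z"
  proof -
    have "indep_var lborel ((\<lambda>f. f 1) \<circ> (\<lambda>\<omega>. restrict (\<lambda>i. V i \<omega>) {1}))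
       lborel ((\<lambda>f. f 2) \<circ> (\<lambda>\<omega>. restrict (\<lambda>i. V i \<omega>) {2}))"
      by (intro indep_var_compose[OF indep_var_restrict[OF indV]]) auto
    then show ?thesis by (simp add: comp_def flip: V1 V2)
  qed
  have dYZ: "distributed M (lborel \<Otimes>\<^sub>M lborel) (\<lambda>\<omega>. (Y \<omega>, Z \<omega>))
      (\<lambda>(y, z). ennreal (exponential_density 1 y) * ennreal (exponential_density 1 z))"
    by (rule distributed_joint_indep[OF lborel.sigma_finite_measure_axioms lborel.sigma_finite_measure_axioms dY dZ ind2])
  have pX: "emeasure M (X -` {a..} \<inter> space M) = ennreal (exp (- a))"
    using distributed_emeasure[OF dX, of "{a..}"] surv_exp[OF a0] by simp
  let ?T = "{p :: real \<times> real. b + c * snd p \<le> fst p}"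
  have T0: "{p \<in> space (lborel \<Otimes>\<^sub>M lborel). b + c * snd p \<le> fst p} \<in> sets (lborel \<Otimes>\<^sub>M lborel)"
    by measurable
  have T[measurable]: "?T \<in> sets (lborel \<Otimes>\<^sub>M lborel)"
    using T0 by (simp add: space_pair_measure)
  have mT: "(\<lambda>p. (case p of (y, z) \<Rightarrow> ennreal (exponential_density 1 y) * ennreal (exponential_density 1 z)) * indicator ?T p) \<in> borel_measurable (lborel \<Otimes>\<^sub>M lborel)"
    unfolding case_prod_beta by (intro borel_measurable_times_ennreal borel_measurable_indicator T) measurable
  have "emeasure M ((\<lambda>\<omega>. (Y \<omega>, Z \<omega>)) -` ?T \<inter> space M)
      = (\<integral>\<^sup>+p. (\<lambda>(y, z). ennreal (exponential_density 1 y) * ennreal (exponential_density 1 z)) p * indicator ?T p \<partial>(lborel \<Otimes>\<^sub>M lborel))"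
    by (rule distributed_emeasure[OF dYZ T])
  also have "\<dots> = (\<integral>\<^sup>+z. \<integral>\<^sup>+y. (\<lambda>(y, z). ennreal (exponential_density 1 y) * ennreal (exponential_density 1 z)) (y, z) * indicator ?T (y, z) \<partial>lborel \<partial>lborel)"
    by (subst pair_lborel_iter2) (rule mT, rule refl)
  also have "\<dots> = (\<integral>\<^sup>+z. ennreal (exponential_density 1 z) * ennreal (exp (- (b + c * z))) \<partial>lborel)"
  proof (intro nn_integral_cong)
    fix z :: real
    show "(\<integral>\<^sup>+y. (\<lambda>(y, z). ennreal (exponential_density 1 y) * ennreal (exponential_density 1 z)) (y, z) * indicator ?T (y, z) \<partial>lborel)
        = ennreal (exponential_density 1 z) * ennreal (exp (- (b + c * z)))"
    proof (cases "z < 0")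
      case True
      then show ?thesis by (simp add: exponential_density_def)
    next
      case False
      then have bz: "b + c * z \<ge> 0" using b0 c0 by simp
      have "(\<integral>\<^sup>+y. (\<lambda>(y, z). ennreal (exponential_density 1 y) * ennreal (exponential_density 1 z)) (y, z) * indicator ?T (y, z) \<partial>lborel)
          = (\<integral>\<^sup>+y. ennreal (exponential_density 1 z) * (ennreal (exponential_density 1 y) * indicator {b + c * z..} y) \<partial>lborel)"
        by (intro nn_integral_cong) (simp add: indicator_def mult.commute)
      also have "\<dots> = ennreal (exponential_density 1 z) * (\<integral>\<^sup>+y. ennreal (exponential_density 1 y) * indicator {b + c * z..} y \<partial>lborel)"
        by (rule nn_integral_cmult) measurable
      also have "\<dots> = ennreal (exponential_density 1 z) * ennreal (exp (- (b + c * z)))"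
        by (simp only: surv_exp[OF bz])
      finally show ?thesis .
    qed
  qed
  also have "\<dots> = ennreal (exp (- b) / (1 + c))" by (rule laplace_exp[OF c0])
  finally have pYZ: "emeasure M ((\<lambda>\<omega>. (Y \<omega>, Z \<omega>)) -` ?T \<inter> space M) = ennreal (exp (- b) / (1 + c))" .
  have prX: "prob (X -` {a..} \<inter> space M) = exp (- a)"
    using pX by (simp add: emeasure_eq_measure)
  have prYZ: "prob ((\<lambda>\<omega>. (Y \<omega>, Z \<omega>)) -` ?T \<inter> space M) = exp (- b) / (1 + c)"
    using pYZ c0 by (simp add: emeasure_eq_measure)
  have Ev: "E \<in> events" unfolding E_def by measurable
  have nn: "X \<omega> \<ge> 0" "Y \<omega> \<ge> 0" "Z \<omega> \<ge> 0" for \<omega> by (auto simp: X_def Y_def Z_def)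
  have set_eq: "{\<omega> \<in> space M. max (min (max (log 2 ((1 + gD * (cmod (hRD \<omega>))\<^sup>2) / (1 + gE * (cmod (hRE \<omega>))\<^sup>2))) 0)
        (log 2 (1 + gR * (cmod (hSR \<omega>))\<^sup>2))) 0 < Rt} = space M - E"
  proof -
    have "max (min (max (log 2 ((1 + gD * (cmod (hRD \<omega>))\<^sup>2) / (1 + gE * (cmod (hRE \<omega>))\<^sup>2))) 0)
        (log 2 (1 + gR * (cmod (hSR \<omega>))\<^sup>2))) 0 < Rt \<longleftrightarrow> \<not> (a \<le> X \<omega> \<and> b + c * Z \<omega> \<le> Y \<omega>)" for \<omega>
      using event_iff[OF assms(2-5) nn[of \<omega>]] unfolding a_def b_def c_def X_def Y_def Z_def .
    then show ?thesis by (auto simp: E_def)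
  qed
  have fin: "1 - exp (- a) * (exp (- b) / (1 + c)) = 1 - exp (- (2 powr Rt - 1) / gR - (2 powr Rt - 1) / gD)
                  * (1 / (1 + 2 powr Rt / gD * gE))"
  proof -
    have e1: "- (2 powr Rt - 1) / gR = - a" unfolding a_def by (rule minus_divide_left[symmetric])
    have "- (2 powr Rt - 1) / gR - (2 powr Rt - 1) / gD = - a + - b" unfolding e1 b_def by simp
    moreover have "2 powr Rt / gD * gE = c" by (simp add: c_def)
    ultimately have "exp (- (2 powr Rt - 1) / gR - (2 powr Rt - 1) / gD) * (1 / (1 + 2 powr Rt / gD * gE))
        = exp (- a) * exp (- b) * (1 / (1 + c))" by (simp only: exp_add)
    then show ?thesis by simp
  qed
  show ?thesis unfolding Let_def
    by (simp only: set_eq prob_compl[OF Ev] probE prX prYZ fin)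
qed

end
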